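(* Let $\mathcal{D}$ be the arena of a $p$-periodic graph on $V$, and let $\mathcal{A}^*$ be its maximum augmented arena. Then $\mathcal{D}$ is copwin if and only if $\mathcal{A}^*$ contains an anchored star, i.e., there exist $t\in\mathbb{Z}_p$ and $u\in V$ such that $\Gamma_t(u,\mathcal{A}^* )=V$ and $(t,u)$ is anchored.
   Context: Let $V$ be a finite set and $p\ge 1$ an integer; $[t]_p$ denotes $t \bmod p$. A $p$-periodic graph $\mathcal{G}=(G_0,\dots,G_{p-1})^*$ is the infinite sequence of directed graphs $G_t=(V,E_{[t]_p})$, $t=0,1,2,\dots$, where $E_0,\dots,E_{p-1}\subseteq V\times V$ (self-loops allowed), each $G_i$ sinkless. An arena on $V$ of length $p$ is a directed graph with vertex set $\mathbb{Z}_p\times V$ (temporal nodes) all of whose edges have the form $((i,w),([i+1]_p,w'))$. The arena of $\mathcal{G}$ is the arena $\mathcal{D}$ with $((i,u),([i+1]_p,v))\in E(\mathcal{D})$ iff $(u,v)\in E_i$. Write $\Gamma_t(u,\mathcal{M})=\{v : ((t,u),([t+1]_p,v))\in E(\mathcal{M})\}$. Game: first the cop, then the robber choose vertices. In each round $t$, with cop at $c$ and robber at $r$, the cop must move to some $c'\in\Gamma_{[t]_p}(c,\mathcal{D})$; if $c'=r$ the cop wins; otherwise the robber must move to some $r'\in\Gamma_{[t]_p}(r,\mathcal{D})$ and the next round starts. A configuration $(t,c,r)$ ($t\in\mathbb{Z}_p$) is the state at the start of a round with index $\equiv t\pmod p$, cop at $c$, robber at $r$, cop to move; it is copwin if from it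 the cop can force capture in finitely many rounds against every robber strategy. $\mathcal{D}$ is copwin if there is $c\in V$ with $(0,c,r)$ copwin for all $r\in V$. An augmented arena of $\mathcal{D}$ is an arena $\mathcal{A}$ with $E(\mathcal{D})\subseteq E(\mathcal{A})$ such that for every edge $((t,x),([t+1]_p,y))\in E(\mathcal{A})$ the configuration $(t,x,y)$ is copwin. $\mathcal{A}^*$ denotes the maximum augmented arena, whose edge set is the union of the edge sets of all augmented arenas of $\mathcal{D}$. A temporal node $(t,u)$ is a star in an arena $\mathcal{A}$ if $\Gamma_t(u,\mathcal{A})=V$; it is anchored if there is a directed walk (possibly of length $0$) in $\mathcal{D}$ from some temporal node $(0,v)$ to $(t,u)$. *)

theory Defs
  imports Main
begin

type_synonym 'v tnode = "nat \<times> 'v"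
type_synonym 'v arena = "('v tnode \<times> 'v tnode) set"

definition periodic_graph :: "'v set \<Rightarrow> nat \<Rightarrow> (nat \<Rightarrow> ('v \<times> 'v) set) \<Rightarrow> bool" where
  "periodic_graph V p E \<longleftrightarrow> finite V \<and> p \<ge> 1 \<and>
     (\<forall>i<p. E i \<subseteq> V \<times> V \<and> (\<forall>u\<in>V. \<exists>v. (u, v) \<in> E i))"

definition is_arena :: "'v set \<Rightarrow> nat \<Rightarrow> 'v arena \<Rightarrow> bool" where
  "is_arena V p A \<longleftrightarrow>
     (\<forall>e\<in>A. \<exists>i w w'. i < p \<and> w \<in> V \<and> w' \<in> V \<and> e = ((i, w), ((i + 1) mod p, w')))"

definition arena_of :: "nat \<Rightarrow> (nat \<Rightarrow> ('v \<times> 'v) set) \<Rightarrow> 'v arena" where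
  "arena_of p E = {((i, u), ((i + 1) mod p, v)) | i u v. i < p \<and> (u, v) \<in> E i}"

definition Gamma :: "nat \<Rightarrow> nat \<Rightarrow> 'v \<Rightarrow> 'v arena \<Rightarrow> 'v set" where
  "Gamma p t u M = {v. ((t, u), ((t + 1) mod p, v)) \<in> M}"

text \<open>Copwin configurations (t, c, r) in arena D: the least set closed under the rule
  "the cop has a move c' from c with either c' = r, or c' \<noteq> r and every robber answer r'
   leads to a copwin configuration at the next time step" (cop can force capture in finitely many rounds).\<close>
inductive copwin_conf :: "'v set \<Rightarrow> nat \<Rightarrow> 'v arena \<Rightarrow> nat \<Rightarrow> 'v \<Rightarrow> 'v \<Rightarrow> bool"
  for V :: "'v set" and p :: nat and D :: "'v arena" where
  step: "\<lbrakk> t < p; c \<in> V; r \<in> V; c' \<in> Gamma p t c D;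
           c' = r \<or> (\<forall>r' \<in> Gamma p t r D. copwin_conf V p D ((t + 1) mod p) c' r') \<rbrakk>
         \<Longrightarrow> copwin_conf V p D t c r"

definition copwin :: "'v set \<Rightarrow> nat \<Rightarrow> 'v arena \<Rightarrow> bool" where
  "copwin V p D \<longleftrightarrow> (\<exists>c\<in>V. \<forall>r\<in>V. copwin_conf V p D 0 c r)"

definition augmented_arena :: "'v set \<Rightarrow> nat \<Rightarrow> 'v arena \<Rightarrow> 'v arena \<Rightarrow> bool" where
  "augmented_arena V p D A \<longleftrightarrow> is_arena V p A \<and> D \<subseteq> A \<and>
     (\<forall>t x t' y. ((t, x), (t', y)) \<in> A \<longrightarrow> copwin_conf V p D t x y)"

definition max_augmented_arena :: "'v set \<Rightarrow> nat \<Rightarrow> 'v arena \<Rightarrow> 'v arena" where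
  "max_augmented_arena V p D = \<Union>{A. augmented_arena V p D A}"

definition is_star :: "'v set \<Rightarrow> nat \<Rightarrow> 'v arena \<Rightarrow> nat \<Rightarrow> 'v \<Rightarrow> bool" where
  "is_star V p A t u \<longleftrightarrow> Gamma p t u A = V"

definition anchored :: "'v set \<Rightarrow> 'v arena \<Rightarrow> nat \<Rightarrow> 'v \<Rightarrow> bool" where
  "anchored V D t u \<longleftrightarrow> (\<exists>v\<in>V. ((0, v), (t, u)) \<in> D\<^sup>*)"

end

theory Submission
  imports Defs
begin

lemma D_edge_copwin:
  assumes pg: "periodic_graph V p E"
    and e: "((t, x), (t', y)) \<in> arena_of p E"
  shows "copwin_conf V p (arena_of p E) t x y"
proof -
  from e obtain i u v where h: "i < p" "(u, v) \<in> E i"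
    "((t, x), (t', y)) = ((i, u), ((i + 1) mod p, v))"
    unfolding arena_of_def by blast
  hence eq: "t = i" "x = u" "t' = (i+1) mod p" "y = v" by auto
  have "E i \<subseteq> V \<times> V" using pg h(1) unfolding periodic_graph_def by auto
  hence V: "u \<in> V" "v \<in> V" using h(2) by auto
  have "v \<in> Gamma p i u (arena_of p E)"
    unfolding Gamma_def arena_of_def using h by blast
  thus ?thesis using eq V h(1) by (auto intro: copwin_conf.step)
qed

lemma back_step:
  assumes pg: "periodic_graph V p E"
    and e: "(a, b) \<in> arena_of p E"
    and P: "\<forall>r\<in>V. copwin_conf V p (arena_of p E) (fst b) (snd b) r"
  shows "\<forall>r\<in>V. copwin_conf V p (arena_of p E) (fst a) (snd a) r"
proof
  fix r assume r: "r \<in> V"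
  from e obtain i u v where h: "i < p" "(u, v) \<in> E i"
    "a = (i, u)" "b = ((i + 1) mod p, v)"
    unfolding arena_of_def by blast
  have EV: "\<And>j. j < p \<Longrightarrow> E j \<subseteq> V \<times> V" using pg unfolding periodic_graph_def by auto
  hence V: "u \<in> V" "v \<in> V" using h(1,2) by auto
  have g: "v \<in> Gamma p i u (arena_of p E)"
    unfolding Gamma_def arena_of_def using h by blast
  have sub: "Gamma p i r (arena_of p E) \<subseteq> V"
    using EV[OF h(1)] unfolding Gamma_def arena_of_def by auto
  have "\<forall>r' \<in> Gamma p i r (arena_of p E). copwin_conf V p (arena_of p E) ((i + 1) mod p) v r'"
    using P sub h(4) by auto
  hence "copwin_conf V p (arena_of p E) i u r"
    using copwin_conf.step[OF h(1) V(1) r g] by blast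
  thus "copwin_conf V p (arena_of p E) (fst a) (snd a) r" using h(3) by simp
qed

theorem theorem1:
  fixes V :: "'v set" and p :: nat and E :: "nat \<Rightarrow> ('v \<times> 'v) set"
  assumes "periodic_graph V p E"
  shows "copwin V p (arena_of p E) \<longleftrightarrow>
         (\<exists>t<p. \<exists>u\<in>V. is_star V p (max_augmented_arena V p (arena_of p E)) t u
                        \<and> anchored V (arena_of p E) t u)"
proof
  let ?D = "arena_of p E"
  assume "copwin V p ?D"
  then obtain c where c: "c \<in> V" "\<forall>r\<in>V. copwin_conf V p ?D 0 c r"
    unfolding copwin_def by blast
  have p: "0 < p" using assms unfolding periodic_graph_def by auto
  define A where "A = ?D \<union> {((0, c), (1 mod p, y)) | y. y \<in> V}"
  have EV: "\<And>j. j < p \<Longrightarrow> E j \<subseteq> V \<times> V" using assms unfolding periodic_graph_def by auto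
  have aug: "augmented_arena V p ?D A"
    unfolding augmented_arena_def
  proof (intro conjI allI impI)
    show "is_arena V p A"
      unfolding is_arena_def A_def arena_of_def using p c(1) EV
      by fastforce
    show "?D \<subseteq> A" unfolding A_def by auto
    fix t x t' y assume "((t, x), (t', y)) \<in> A"
    then show "copwin_conf V p ?D t x y"
      unfolding A_def using D_edge_copwin[OF assms] c by auto
  qed
  have "Gamma p 0 c (max_augmented_arena V p ?D) = V"
  proof
    show "V \<subseteq> Gamma p 0 c (max_augmented_arena V p ?D)"
      unfolding Gamma_def max_augmented_arena_def using aug A_def by auto
    show "Gamma p 0 c (max_augmented_arena V p ?D) \<subseteq> V"
    proof
      fix y assume "y \<in> Gamma p 0 c (max_augmented_arena V p ?D)"
      then obtain B where "augmented_arena V p ?D B" "((0, c), ((0 + 1) mod p, y)) \<in> B"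
        unfolding Gamma_def max_augmented_arena_def by auto
      thus "y \<in> V" unfolding augmented_arena_def is_arena_def by fastforce
    qed
  qed
  moreover have "anchored V ?D 0 c" unfolding anchored_def using c(1) by blast
  ultimately show "\<exists>t<p. \<exists>u\<in>V. is_star V p (max_augmented_arena V p ?D) t u
                        \<and> anchored V ?D t u"
    using p c(1) unfolding is_star_def by blast
next
  let ?D = "arena_of p E"
  assume "\<exists>t<p. \<exists>u\<in>V. is_star V p (max_augmented_arena V p ?D) t u \<and> anchored V ?D t u"
  then obtain t u where tu: "t < p" "u \<in> V" "is_star V p (max_augmented_arena V p ?D) t u"
    "anchored V ?D t u" by blast
  have star: "\<forall>r\<in>V. copwin_conf V p ?D t u r"
  proof
    fix r assume "r \<in> V"
    hence "r \<in> Gamma p t u (max_augmented_arena V p ?D)" using tu(3) unfolding is_star_def by simp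
    then obtain B where "augmented_arena V p ?D B" "((t, u), ((t + 1) mod p, r)) \<in> B"
      unfolding Gamma_def max_augmented_arena_def by auto
    thus "copwin_conf V p ?D t u r" unfolding augmented_arena_def by blast
  qed
  from tu(4) obtain v where v: "v \<in> V" "((0, v), (t, u)) \<in> ?D\<^sup>*"
    unfolding anchored_def by blast
  have "\<forall>r\<in>V. copwin_conf V p ?D (fst (0::nat, v)) (snd (0::nat, v)) r"
    using v(2)
  proof (induction rule: converse_rtrancl_induct)
    case base thus ?case using star by simp
  next
    case (step a b) thus ?case using back_step[OF assms] by blast
  qed
  thus "copwin V p ?D" unfolding copwin_def using v(1) by auto
qed

end
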